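(* Let $\pi_1$ and $\mu_1$ be probability densities on $\mathbb{R}^d$ with $\pi_1(x)>0$ for all $x$, and assume $D_{\mathrm{KL}}(\mu_1\|\pi_1)<\infty$. Let $\lambda_0,\lambda_1>0$. For probability densities $P$ on $\mathbb{R}^d$ define $$\mathcal{L}_J[P]=\lambda_0\, D_{\mathrm{KL}}(P\|\pi_1)+\lambda_1\, D_{\mathrm{KL}}(\mu_1\|P)\in[0,\infty].$$ Then: (1) $\mathcal{L}_J$ is strictly convex on the convex set of probability densities $P$ with $\mathcal{L}_J[P]<\infty$, and $\mathcal{L}_J$ admits a unique global minimizer $P_*$ among all probability densities on $\mathbb{R}^d$; (2) the minimizer satisfies $D_{\mathrm{KL}}(P_*\|\pi_1)\leqslant D_{\mathrm{KL}}(\mu_1\|\pi_1)$.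
   Context: For probability densities $P,Q$ on $\mathbb{R}^d$, $D_{\mathrm{KL}}(P\|Q)=\int P(x)\log\frac{P(x)}{Q(x)}\,dx$ (with the usual conventions, equal to $+\infty$ if $P$ is not absolutely continuous with respect to $Q$). In the paper, $P$ plays the role of the pushforward density $F_\#\pi_0$ of an exact base distribution under a normalizing flow $F$, and $\mu_1$ is an imperfect approximation of the target $\pi_1$; $\mathcal{L}_J$ is (up to a $P$-independent constant) the weighted Jeffreys divergence training objective. *)

theory Defs
  imports "HOL-Analysis.Analysis"
begin

definition prob_density :: "('a::euclidean_space \<Rightarrow> real) \<Rightarrow> bool" where
  "prob_density f \<longleftrightarrow> f \<in> borel_measurable lborel \<and> (\<forall>x. 0 \<le> f x)
     \<and> (\<integral>\<^sup>+ x. ennreal (f x) \<partial>lborel) = 1"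

text \<open>Kullback--Leibler divergence of densities, with value in [0,\<infinity>]:
  \<infinity> if P is not absolutely continuous w.r.t. Q, otherwise the integral of
  P log(P/Q) (positive part minus negative part; the negative part is finite
  for probability densities). Convention 0 log(0/q) = 0 holds since 0 * _ = 0.\<close>
definition KL :: "('a::euclidean_space \<Rightarrow> real) \<Rightarrow> ('a \<Rightarrow> real) \<Rightarrow> ereal" where
  "KL P Q = (if AE x in lborel. Q x = 0 \<longrightarrow> P x = 0
     then enn2ereal (\<integral>\<^sup>+ x. ennreal (P x * ln (P x / Q x)) \<partial>lborel)
        - enn2ereal (\<integral>\<^sup>+ x. ennreal (- (P x * ln (P x / Q x))) \<partial>lborel)
     else \<infinity>)"

definition LJ :: "real \<Rightarrow> real \<Rightarrow> ('a::euclidean_space \<Rightarrow> real) \<Rightarrow> ('a \<Rightarrow> real)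
    \<Rightarrow> ('a \<Rightarrow> real) \<Rightarrow> ereal" where
  "LJ lam0 lam1 pi1 mu1 P = ereal lam0 * KL P pi1 + ereal lam1 * KL mu1 P"

end

theory Submission
  imports Defs
begin


lemma xlog_tangent:
  fixes u m :: real assumes "0 \<le> u" "0 < m" shows "u * ln (u/m) \<ge> u - m"
proof (cases "u = 0")
  case True then show ?thesis using assms by simp
next
  case False
  then have u: "0 < u" using assms by simp
  have "ln m - ln u \<le> (m - u)/u" using ln_diff_le[OF assms(2) u] .
  then have "u * (ln m - ln u) \<le> m - u" using u by (simp add: field_simps)
  then show ?thesis using u assms by (simp add: ln_div algebra_simps)
qed

lemma xlog_tangent_strict:
  fixes u m :: real assumes "0 \<le> u" "0 < m" "u \<noteq> m" shows "u * ln (u/m) > u - m"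
proof (cases "u = 0")
  case True then show ?thesis using assms by simp
next
  case False
  then have u: "0 < u" using assms by simp
  have "ln m - ln u < (m - u)/u" using ln_diff_less[OF assms(2) u] assms(3) by simp
  then have "u * (ln m - ln u) < m - u" using u by (simp add: field_simps)
  then show ?thesis using u assms by (simp add: ln_div algebra_simps)
qed

definition gfun :: "real \<Rightarrow> real \<Rightarrow> real \<Rightarrow> real \<Rightarrow> real" where
  "gfun a pp mm p = ln p - ln pp - a * mm / p"

definition solp :: "real \<Rightarrow> real \<Rightarrow> real \<Rightarrow> real \<Rightarrow> real" where
  "solp a pp mm s = (THE p. 0 < p \<and> gfun a pp mm p = s)"

lemma gfun_strict:
  assumes "0 \<le> a" "0 \<le> mm" "0 < p1" "p1 < p2"
  shows "gfun a pp mm p1 < gfun a pp mm p2"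
proof -
  have "ln p1 < ln p2" using assms by simp
  moreover have "a * mm / p2 \<le> a * mm / p1" using assms by (intro divide_left_mono) auto
  ultimately show ?thesis unfolding gfun_def by linarith
qed

lemma gfun_exists:
  assumes a: "0 \<le> a" and mm: "0 \<le> mm" and pp: "0 < pp"
  shows "\<exists>p. pp * exp s \<le> p \<and> p \<le> pp * exp (s+1) + a * mm \<and> gfun a pp mm p = s"
proof -
  define lo where "lo = pp * exp s"
  define hi where "hi = pp * exp (s+1) + a * mm"
  have lo: "0 < lo" using pp by (simp add: lo_def)
  have amm: "0 \<le> a * mm" using a mm by simp
  have "exp s \<le> exp (s+1)" by simp
  then have "pp * exp s \<le> pp * exp (s+1)" using pp by simp
  then have lohi: "lo \<le> hi" unfolding lo_def hi_def using amm by linarith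
  have glo: "gfun a pp mm lo \<le> s"
  proof -
    have "ln lo = ln pp + s" using pp by (simp add: lo_def ln_mult)
    moreover have "0 \<le> a * mm / lo" using amm lo by simp
    ultimately show ?thesis unfolding gfun_def by linarith
  qed
  have ghi: "s \<le> gfun a pp mm hi"
  proof -
    have h1: "pp * exp (s+1) \<le> hi" unfolding hi_def using amm by simp
    have hpos: "0 < pp * exp (s+1)" using pp by simp
    have "ln (pp * exp (s+1)) \<le> ln hi" using h1 hpos by simp
    moreover have "ln (pp * exp (s+1)) = ln pp + s + 1" using pp by (simp add: ln_mult)
    moreover have "a * mm / hi \<le> 1" using hpos amm unfolding hi_def by (simp add: divide_le_eq)
    ultimately show ?thesis unfolding gfun_def by linarith
  qed
  have cont: "continuous_on {lo..hi} (gfun a pp mm)"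
    unfolding gfun_def[abs_def] using lo by (auto intro!: continuous_intros)
  from IVT'[of "gfun a pp mm" lo s hi, OF glo ghi lohi cont] show ?thesis
    unfolding lo_def hi_def by blast
qed

lemma solp_spec:
  assumes a: "0 \<le> a" and mm: "0 \<le> mm" and pp: "0 < pp"
  shows "0 < solp a pp mm s" "gfun a pp mm (solp a pp mm s) = s"
    "pp * exp s \<le> solp a pp mm s" "solp a pp mm s \<le> pp * exp (s+1) + a * mm"
proof -
  obtain p where p: "pp * exp s \<le> p" "p \<le> pp * exp (s+1) + a * mm" "gfun a pp mm p = s"
    using gfun_exists[OF a mm pp] by blast
  have "0 < pp * exp s" using pp by simp
  then have p0: "0 < p" using p(1) by linarith
  have uniq: "q = p" if q: "0 < q" "gfun a pp mm q = s" for q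
  proof (rule ccontr)
    assume "q \<noteq> p"
    then consider "q < p" | "p < q" by linarith
    then show False
    proof cases
      case 1
      from gfun_strict[where pp=pp, OF a mm q(1) 1] q(2) p(3) show False by linarith
    next
      case 2
      from gfun_strict[where pp=pp, OF a mm p0 2] q(2) p(3) show False by linarith
    qed
  qed
  have e: "solp a pp mm s = p" unfolding solp_def
  proof (rule the_equality)
    show "0 < p \<and> gfun a pp mm p = s" using p0 p(3) by blast
    show "\<And>q. 0 < q \<and> gfun a pp mm q = s \<Longrightarrow> q = p" using uniq by blast
  qed
  show "0 < solp a pp mm s" using e p0 by simp
  show "gfun a pp mm (solp a pp mm s) = s" using e p(3) by simp
  show "pp * exp s \<le> solp a pp mm s" using e p(1) by simp
  show "solp a pp mm s \<le> pp * exp (s+1) + a * mm" using e p(2) by simp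
qed

lemma solp_mono:
  assumes a: "0 \<le> a" and mm: "0 \<le> mm" and pp: "0 < pp" and s: "s1 \<le> s2"
  shows "solp a pp mm s1 \<le> solp a pp mm s2"
proof (rule ccontr)
  assume "\<not> ?thesis"
  then have "solp a pp mm s2 < solp a pp mm s1" by simp
  from gfun_strict[where pp=pp, OF a mm solp_spec(1)[OF a mm pp] this] show False
    using solp_spec(2)[OF a mm pp, of s1] solp_spec(2)[OF a mm pp, of s2] s by linarith
qed

lemma solp_lip:
  assumes a: "0 \<le> a" and mm: "0 \<le> mm" and pp: "0 < pp" and s: "s1 \<le> s2"
  shows "solp a pp mm s2 - solp a pp mm s1 \<le> solp a pp mm s2 * (s2 - s1)"
proof -
  define p1 where "p1 = solp a pp mm s1"
  define p2 where "p2 = solp a pp mm s2"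
  have p1: "0 < p1" "gfun a pp mm p1 = s1" using solp_spec[OF a mm pp] by (auto simp: p1_def)
  have p2: "0 < p2" "gfun a pp mm p2 = s2" using solp_spec[OF a mm pp] by (auto simp: p2_def)
  have le: "p1 \<le> p2" using solp_mono[OF a mm pp s] by (simp add: p1_def p2_def)
  have "a * mm / p2 \<le> a * mm / p1" using a mm p1 le by (intro divide_left_mono) auto
  then have "ln p2 - ln p1 \<le> s2 - s1" using p1 p2 unfolding gfun_def by linarith
  moreover have "ln p1 - ln p2 \<le> (p1 - p2) / p2" by (rule ln_diff_le[OF p1(1) p2(1)])
  moreover have "(p1 - p2) / p2 = - ((p2 - p1) / p2)" by (metis minus_diff_eq minus_divide_left)
  ultimately have "(p2 - p1) / p2 \<le> s2 - s1" by linarith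
  then have "p2 - p1 \<le> p2 * (s2 - s1)" using p2 by (simp add: field_simps)
  then show ?thesis by (simp add: p1_def p2_def)
qed

lemma solp_neg:
  assumes a: "0 \<le> a" and mm: "0 \<le> mm" and pp: "0 < pp" and s: "s < 0"
  shows "solp a pp mm s \<le> pp * exp (s/2) + 2 * a * mm / (- s)"
proof -
  define p where "p = solp a pp mm s"
  have p: "0 < p" "gfun a pp mm p = s" using solp_spec[OF a mm pp] by (auto simp: p_def)
  have nn: "0 \<le> 2 * a * mm / (- s)" using a mm s by (intro divide_nonneg_nonneg) auto
  show ?thesis
  proof (cases "p \<le> pp * exp (s/2)")
    case True then show ?thesis using nn by (simp add: p_def)
  next
    case False
    then have "ln (pp * exp (s/2)) < ln p" using pp p by simp
    then have "ln pp + s/2 < ln p" using pp by (simp add: ln_mult)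
    then have "- s / 2 < a * mm / p" using p unfolding gfun_def by linarith
    then have "(- s / 2) * p < a * mm" using p by (simp add: field_simps)
    then have "p < 2 * a * mm / (- s)" using s by (simp add: field_simps)
    moreover have "0 < pp * exp (s/2)" using pp by simp
    ultimately show ?thesis unfolding p_def by linarith
  qed
qed

lemma solp_le_iff:
  assumes a: "0 \<le> a" and mm: "0 \<le> mm" and pp: "0 < pp" and c: "0 < c"
  shows "solp a pp mm s \<le> c \<longleftrightarrow> s \<le> gfun a pp mm c"
proof
  assume h: "solp a pp mm s \<le> c"
  show "s \<le> gfun a pp mm c"
  proof (cases "solp a pp mm s = c")
    case True then show ?thesis using solp_spec(2)[OF a mm pp, of s] by (simp add: True)
  next
    case False
    then have "solp a pp mm s < c" using h by simp
    from gfun_strict[where pp=pp, OF a mm solp_spec(1)[OF a mm pp] this] solp_spec(2)[OF a mm pp, of s]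
    show ?thesis by linarith
  qed
next
  assume h: "s \<le> gfun a pp mm c"
  show "solp a pp mm s \<le> c"
  proof (rule ccontr)
    assume "\<not> ?thesis"
    then have "c < solp a pp mm s" by simp
    from gfun_strict[where pp=pp, OF a mm c this] h solp_spec(2)[OF a mm pp, of s] show False by linarith
  qed
qed


lemma key_pt:
  fixes a pp mm p q :: real
  assumes a: "0 \<le> a" and pp: "0 < pp" and mm: "0 \<le> mm" and p: "0 < p" and q: "0 \<le> q"
    and qm: "q = 0 \<longrightarrow> mm = 0"
  shows "q * ln (q / pp) + a * (mm * ln (mm / q)) \<ge>
     p * ln (p / pp) + a * (mm * ln (mm / p)) + ((ln p - ln pp - a * mm / p) + 1) * (q - p)"
proof (cases "q = 0")
  case True
  then have m0: "mm = 0" using qm by simp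
  have "p * ln (p / pp) = p * (ln p - ln pp)" using p pp by (simp add: ln_div)
  then show ?thesis using True m0 p by (simp add: algebra_simps)
next
  case False
  then have q0: "0 < q" using q by simp
  have T1: "q * (ln q - ln p) \<ge> q - p" using xlog_tangent[OF q p] q0 p by (simp add: ln_div)
  have T2: "a * mm * (ln q - ln p) \<le> a * mm * ((q - p) / p)"
    using ln_diff_le[OF q0 p] a mm by (intro mult_left_mono) auto
  have e1: "q * ln (q / pp) = q * ln q - q * ln pp" using q0 pp by (simp add: ln_div algebra_simps)
  have e2: "p * ln (p / pp) = p * ln p - p * ln pp" using p pp by (simp add: ln_div algebra_simps)
  have e3: "mm * ln (mm / q) - mm * ln (mm / p) = mm * (ln p - ln q)"
  proof (cases "mm = 0")
    case False
    then have "0 < mm" using mm by simp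
    then show ?thesis using q0 p by (simp add: ln_div algebra_simps)
  qed simp
  have e4: "a * mm * ((q - p) / p) = a * mm / p * q - a * mm" using p by (simp add: field_simps)
  have e5: "((ln p - ln pp - a * mm / p) + 1) * (q - p)
      = q * ln p - p * ln p - q * ln pp + p * ln pp - (a * mm / p * q - a * mm) + q - p"
    using p by (simp add: field_simps)
  have e6: "q * (ln q - ln p) = q * ln q - q * ln p" by (simp add: algebra_simps)
  have "a * (mm * ln (mm / q)) - a * (mm * ln (mm / p)) = a * (mm * ln (mm / q) - mm * ln (mm / p))"
    by (simp add: right_diff_distrib)
  also have "\<dots> = a * (mm * (ln p - ln q))" using e3 by simp
  also have "\<dots> = - (a * mm * (ln q - ln p))" by (simp add: algebra_simps)
  finally have e7: "a * (mm * ln (mm / q)) - a * (mm * ln (mm / p)) = - (a * mm * (ln q - ln p))" .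
  show ?thesis using T1 T2 e1 e2 e4 e5 e6 e7 by linarith
qed



lemma prob_density_int:
  assumes "prob_density P" shows "integrable lborel P" "integral\<^sup>L lborel P = 1"
proof -
  have m: "P \<in> borel_measurable lborel" and nn: "\<And>x. 0 \<le> P x"
    and one: "(\<integral>\<^sup>+ x. ennreal (P x) \<partial>lborel) = 1" using assms by (auto simp: prob_density_def)
  show "integrable lborel P" by (rule integrableI_nonneg) (use m nn one in auto)
  show "integral\<^sup>L lborel P = 1" using integral_eq_nn_integral[OF m] nn one by simp
qed

lemma prob_density_meas: "prob_density P \<Longrightarrow> P \<in> borel_measurable lborel"
  by (simp add: prob_density_def)

lemma meas_klint:
  fixes P Q :: "'a \<Rightarrow> real"
  assumes [measurable]: "P \<in> borel_measurable M" "Q \<in> borel_measurable M"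
  shows "(\<lambda>x. P x * ln (P x / Q x)) \<in> borel_measurable M"
  by (intro borel_measurable_times borel_measurable_ln borel_measurable_divide assms)

lemma KL_neg_bound:
  assumes P: "prob_density P" and Q: "prob_density Q" and ac: "AE x in lborel. Q x = 0 \<longrightarrow> P x = 0"
  shows "(\<integral>\<^sup>+ x. ennreal (- (P x * ln (P x / Q x))) \<partial>lborel) \<le> 1"
proof -
  have "(\<integral>\<^sup>+ x. ennreal (- (P x * ln (P x / Q x))) \<partial>lborel) \<le> (\<integral>\<^sup>+ x. ennreal (Q x) \<partial>lborel)"
  proof (rule nn_integral_mono_AE)
    show "AE x in lborel. ennreal (- (P x * ln (P x / Q x))) \<le> ennreal (Q x)"
      using ac
    proof eventually_elim
      case (elim x)
      have p: "0 \<le> P x" "0 \<le> Q x" using P Q by (auto simp: prob_density_def)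
      show ?case
      proof (cases "Q x = 0")
        case True then show ?thesis using elim by simp
      next
        case False
        then have "Q x > 0" using p by simp
        from xlog_tangent[OF p(1) this] have "- (P x * ln (P x / Q x)) \<le> Q x" using p by simp
        then show ?thesis by (rule ennreal_leI)
      qed
    qed
  qed
  then show ?thesis using Q by (simp add: prob_density_def)
qed

lemma KL_cases:
  assumes P: "prob_density P" and Q: "prob_density Q" and fin: "KL P Q \<noteq> \<infinity>"
  shows "(AE x in lborel. Q x = 0 \<longrightarrow> P x = 0) \<and> integrable lborel (\<lambda>x. P x * ln (P x / Q x))
     \<and> KL P Q = ereal (\<integral>x. P x * ln (P x / Q x) \<partial>lborel)"
proof -
  have ac: "AE x in lborel. Q x = 0 \<longrightarrow> P x = 0"
    using fin by (auto simp: KL_def split: if_splits)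
  let ?A = "(\<integral>\<^sup>+ x. ennreal (P x * ln (P x / Q x)) \<partial>lborel)"
  let ?B = "(\<integral>\<^sup>+ x. ennreal (- (P x * ln (P x / Q x))) \<partial>lborel)"
  have B: "?B \<noteq> \<infinity>" using KL_neg_bound[OF P Q ac] by (auto simp: top_unique)
  have K: "KL P Q = enn2ereal ?A - enn2ereal ?B" using ac by (simp add: KL_def)
  have A: "?A \<noteq> \<infinity>"
  proof
    assume "?A = \<infinity>"
    then have "KL P Q = \<infinity>" using K B by (cases ?B) auto
    then show False using fin by simp
  qed
  have meas: "(\<lambda>x. P x * ln (P x / Q x)) \<in> borel_measurable lborel" using P Q by (intro meas_klint) (simp_all add: prob_density_def)
  have int: "integrable lborel (\<lambda>x. P x * ln (P x / Q x))"
    using A B meas by (simp add: real_integrable_def)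
  have "(\<integral>x. P x * ln (P x / Q x) \<partial>lborel) = enn2real ?A - enn2real ?B"
    using real_lebesgue_integral_def[OF int] by simp
  moreover have "enn2ereal ?A - enn2ereal ?B = ereal (enn2real ?A - enn2real ?B)"
    using A B by (cases ?A; cases ?B) auto
  ultimately show ?thesis using ac int K by simp
qed

lemma KL_int:
  assumes ac: "AE x in lborel. Q x = 0 \<longrightarrow> P x = 0" and int: "integrable lborel (\<lambda>x. P x * ln (P x / Q x))"
  shows "KL P Q = ereal (\<integral>x. P x * ln (P x / Q x) \<partial>lborel)"
proof -
  let ?A = "(\<integral>\<^sup>+ x. ennreal (P x * ln (P x / Q x)) \<partial>lborel)"
  let ?B = "(\<integral>\<^sup>+ x. ennreal (- (P x * ln (P x / Q x))) \<partial>lborel)"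
  have A: "?A \<noteq> \<infinity>" and B: "?B \<noteq> \<infinity>" using int by (auto simp: real_integrable_def)
  have "(\<integral>x. P x * ln (P x / Q x) \<partial>lborel) = enn2real ?A - enn2real ?B"
    using real_lebesgue_integral_def[OF int] by simp
  moreover have "enn2ereal ?A - enn2ereal ?B = ereal (enn2real ?A - enn2real ?B)"
    using A B by (cases ?A; cases ?B) auto
  ultimately show ?thesis using ac by (simp add: KL_def)
qed

lemma KL_integral_ge:
  assumes P: "prob_density P" and Q: "prob_density Q" and ac: "AE x in lborel. Q x = 0 \<longrightarrow> P x = 0"
    and int: "integrable lborel (\<lambda>x. P x * ln (P x / Q x))"
  shows "0 \<le> (\<integral>x. P x * ln (P x / Q x) \<partial>lborel)"
proof -
  have "(\<integral>x. P x - Q x \<partial>lborel) \<le> (\<integral>x. P x * ln (P x / Q x) \<partial>lborel)"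
  proof (rule integral_mono_AE)
    show "integrable lborel (\<lambda>x. P x - Q x)" using prob_density_int[OF P] prob_density_int[OF Q] by simp
    show "AE x in lborel. P x - Q x \<le> P x * ln (P x / Q x)" using ac
    proof eventually_elim
      case (elim x)
      have p: "0 \<le> P x" "0 \<le> Q x" using P Q by (auto simp: prob_density_def)
      show ?case
      proof (cases "Q x = 0")
        case True then show ?thesis using elim by simp
      next
        case False
        then have "Q x > 0" using p by simp
        from xlog_tangent[OF p(1) this] show ?thesis .
      qed
    qed
  qed (use int in auto)
  then show ?thesis using prob_density_int[OF P] prob_density_int[OF Q] by simp
qed

lemma KL_nonneg:
  assumes P: "prob_density P" and Q: "prob_density Q" shows "0 \<le> KL P Q"
proof (cases "KL P Q = \<infinity>")
  case False
  from KL_cases[OF P Q False] KL_integral_ge[OF P Q] show ?thesis by auto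
qed simp


lemma integrable_sandwich:
  fixes g :: "'a \<Rightarrow> real"
  assumes "integrable M l" "integrable M u" "g \<in> borel_measurable M"
    "AE x in M. l x \<le> g x \<and> g x \<le> u x"
  shows "integrable M g"
proof (rule Bochner_Integration.integrable_bound[where f="\<lambda>x. \<bar>l x\<bar> + \<bar>u x\<bar>"])
  show "integrable M (\<lambda>x. \<bar>l x\<bar> + \<bar>u x\<bar>)" using assms by auto
  show "AE x in M. norm (g x) \<le> norm (\<bar>l x\<bar> + \<bar>u x\<bar>)" using assms(4) by eventually_elim auto
qed (use assms in auto)


locale jset =
  fixes pi1 mu1 :: "'a::euclidean_space \<Rightarrow> real" and lam0 lam1 :: real
  assumes pi1: "prob_density pi1" and mu1: "prob_density mu1"
    and pipos: "\<And>x. pi1 x > 0"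
    and KLmu: "KL mu1 pi1 < \<infinity>"
    and l0: "lam0 > 0" and l1: "lam1 > 0"
begin

definition "f0 P x = P x * ln (P x / pi1 x)"
definition "f1 P x = mu1 x * ln (mu1 x / P x)"

lemma f0_meas: "P \<in> borel_measurable lborel \<Longrightarrow> f0 P \<in> borel_measurable lborel"
  unfolding f0_def[abs_def] using pi1 by (intro meas_klint) (auto simp: prob_density_def)
lemma f1_meas: "P \<in> borel_measurable lborel \<Longrightarrow> f1 P \<in> borel_measurable lborel"
  unfolding f1_def[abs_def] using mu1 by (intro meas_klint) (auto simp: prob_density_def)

lemma mu_nn: "0 \<le> mu1 x" using mu1 by (simp add: prob_density_def)

lemma LJ_fin:
  assumes P: "prob_density P" and fin: "LJ lam0 lam1 pi1 mu1 P < \<infinity>"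
  shows "integrable lborel (f0 P) \<and> integrable lborel (f1 P)
    \<and> (AE x in lborel. P x = 0 \<longrightarrow> mu1 x = 0)
    \<and> LJ lam0 lam1 pi1 mu1 P = ereal (lam0 * integral\<^sup>L lborel (f0 P) + lam1 * integral\<^sup>L lborel (f1 P))"
proof -
  have n1: "0 \<le> KL P pi1" using KL_nonneg[OF P pi1] .
  have n2: "0 \<le> KL mu1 P" using KL_nonneg[OF mu1 P] .
  have a: "KL P pi1 \<noteq> \<infinity>"
  proof
    assume "KL P pi1 = \<infinity>"
    then have "LJ lam0 lam1 pi1 mu1 P = \<infinity>" using n2 l0 l1 by (simp add: LJ_def)
    then show False using fin by simp
  qed
  have b: "KL mu1 P \<noteq> \<infinity>"
  proof
    assume "KL mu1 P = \<infinity>"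
    then have "LJ lam0 lam1 pi1 mu1 P = \<infinity>" using n1 l0 l1 by (simp add: LJ_def)
    then show False using fin by simp
  qed
  from KL_cases[OF P pi1 a] KL_cases[OF mu1 P b] show ?thesis
    by (auto simp: LJ_def f0_def[abs_def] f1_def[abs_def])
qed

lemma LJ_of_int:
  assumes "AE x in lborel. P x = 0 \<longrightarrow> mu1 x = 0" "integrable lborel (f0 P)" "integrable lborel (f1 P)"
  shows "LJ lam0 lam1 pi1 mu1 P = ereal (lam0 * integral\<^sup>L lborel (f0 P) + lam1 * integral\<^sup>L lborel (f1 P))"
proof -
  have "KL P pi1 = ereal (integral\<^sup>L lborel (f0 P))"
    using KL_int[of pi1 P] assms(2) pipos unfolding f0_def[abs_def] by (simp add: less_imp_neq[symmetric])
  moreover have "KL mu1 P = ereal (integral\<^sup>L lborel (f1 P))"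
    using KL_int[of P mu1] assms(1,3) unfolding f1_def[abs_def] by simp
  ultimately show ?thesis by (simp add: LJ_def)
qed


lemma f0_mix_pt:
  fixes p q t pp :: real
  assumes p: "0 \<le> p" "0 \<le> q" and t: "0 < t" "t < 1" and pp: "0 < pp"
  shows "(t*p + (1-t)*q) * ln ((t*p + (1-t)*q) / pp) \<le> t * (p * ln (p / pp)) + (1-t) * (q * ln (q / pp))"
    and "p \<noteq> q \<Longrightarrow> (t*p + (1-t)*q) * ln ((t*p + (1-t)*q) / pp) < t * (p * ln (p / pp)) + (1-t) * (q * ln (q / pp))"
proof -
  define m where "m = t*p + (1-t)*q"
  have m0: "0 \<le> m" using p t by (simp add: m_def)
  have key: "u * ln (u / pp) \<ge> u * ln (m / pp) + (u - m)" and
       keys: "u \<noteq> m \<Longrightarrow> u * ln (u / pp) > u * ln (m / pp) + (u - m)"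
    if u: "0 \<le> u" and mp: "0 < m" for u
  proof -
    have e: "u * ln (u / pp) = u * ln (m / pp) + u * ln (u / m)"
    proof (cases "u = 0")
      case False
      then have "u > 0" using u by simp
      then show ?thesis using mp pp by (simp add: ln_div algebra_simps)
    qed simp
    show "u * ln (u / pp) \<ge> u * ln (m / pp) + (u - m)" using e xlog_tangent[OF u mp] by simp
    show "u \<noteq> m \<Longrightarrow> u * ln (u / pp) > u * ln (m / pp) + (u - m)" using e xlog_tangent_strict[OF u mp] by simp
  qed
  have main: "m * ln (m / pp) \<le> t * (p * ln (p / pp)) + (1-t) * (q * ln (q / pp))
      \<and> (p \<noteq> q \<longrightarrow> m * ln (m / pp) < t * (p * ln (p / pp)) + (1-t) * (q * ln (q / pp)))"
  proof (cases "m = 0")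
    case True
    have "t*p \<ge> 0" "(1-t)*q \<ge> 0" using p t by simp_all
    then have "t*p = 0" "(1-t)*q = 0" using True m_def by linarith+
    then have "p = 0" "q = 0" using t by simp_all
    then show ?thesis using True by simp
  next
    case False
    then have mp: "0 < m" using m0 by simp
    have s: "t * (p * ln (m / pp) + (p - m)) + (1-t) * (q * ln (m / pp) + (q - m)) = m * ln (m / pp)"
      unfolding m_def by (simp add: algebra_simps)
    have A: "t * (p * ln (p / pp)) \<ge> t * (p * ln (m / pp) + (p - m))"
      using key[OF p(1) mp] t by (intro mult_left_mono) auto
    have B: "(1-t) * (q * ln (q / pp)) \<ge> (1-t) * (q * ln (m / pp) + (q - m))"
      using key[OF p(2) mp] t by (intro mult_left_mono) auto
    have C: "p \<noteq> q \<Longrightarrow> t * (p * ln (p / pp)) > t * (p * ln (m / pp) + (p - m))"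
    proof -
      assume "p \<noteq> q"
      have "m - p = (1-t)*(q-p)" by (simp add: m_def algebra_simps)
      then have "p \<noteq> m" using t \<open>p \<noteq> q\<close> by auto
      then show ?thesis using keys[OF p(1) mp] t by (intro mult_strict_left_mono) auto
    qed
    show ?thesis using A B C s by linarith
  qed
  then show "(t*p + (1-t)*q) * ln ((t*p + (1-t)*q) / pp) \<le> t * (p * ln (p / pp)) + (1-t) * (q * ln (q / pp))"
    and "p \<noteq> q \<Longrightarrow> (t*p + (1-t)*q) * ln ((t*p + (1-t)*q) / pp) < t * (p * ln (p / pp)) + (1-t) * (q * ln (q / pp))"
    unfolding m_def by auto
qed

lemma f1_mix_pt:
  fixes p q t mm :: real
  assumes p: "0 < p" "0 < q" and t: "0 < t" "t < 1" and mm: "0 \<le> mm"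
  shows "mm * ln (mm / (t*p + (1-t)*q)) \<le> t * (mm * ln (mm / p)) + (1-t) * (mm * ln (mm / q))"
proof (cases "mm = 0")
  case False
  then have mm: "0 < mm" using mm by simp
  define m where "m = t*p + (1-t)*q"
  have "0 < t*p" "0 < (1-t)*q" using p t by simp_all
  then have mp: "0 < m" unfolding m_def by linarith
  have a: "ln p - ln m \<le> (p - m) / m" by (rule ln_diff_le[OF p(1) mp])
  have b: "ln q - ln m \<le> (q - m) / m" by (rule ln_diff_le[OF p(2) mp])
  have c: "t * ((p - m) / m) + (1-t) * ((q - m) / m) = 0"
    using mp unfolding m_def by (simp add: field_simps)
  have "t * (ln p - ln m) + (1-t) * (ln q - ln m) \<le> 0"
  proof -
    have "t * (ln p - ln m) \<le> t * ((p - m) / m)" using a t by (intro mult_left_mono) auto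
    moreover have "(1-t) * (ln q - ln m) \<le> (1-t) * ((q - m) / m)" using b t by (intro mult_left_mono) auto
    ultimately show ?thesis using c by linarith
  qed
  then have "ln m \<ge> t * ln p + (1-t) * ln q" by (simp add: algebra_simps)
  then have "mm * (ln mm - ln m) \<le> mm * (t * (ln mm - ln p) + (1-t) * (ln mm - ln q))"
    using mm by (intro mult_left_mono) (auto simp: algebra_simps)
  then show ?thesis using mm mp p unfolding m_def[symmetric] by (simp add: ln_div algebra_simps)
qed simp


lemma f0_lower: "0 \<le> P x \<Longrightarrow> f0 P x \<ge> P x - pi1 x"
  unfolding f0_def using xlog_tangent[of "P x" "pi1 x"] pipos by simp

lemma f1_lower: "0 \<le> P x \<Longrightarrow> 0 < P x \<or> mu1 x = 0 \<Longrightarrow> f1 P x \<ge> mu1 x - P x"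
  unfolding f1_def using xlog_tangent[of "mu1 x" "P x"] mu_nn[of x] by auto

lemma mix:
  assumes P: "prob_density P" and LP: "LJ lam0 lam1 pi1 mu1 P < \<infinity>"
    and Q: "prob_density Q" and LQ: "LJ lam0 lam1 pi1 mu1 Q < \<infinity>"
    and t: "0 < t" "t < 1"
  defines "M \<equiv> \<lambda>x. t * P x + (1 - t) * Q x"
  shows "prob_density M" "integrable lborel (f0 M)" "integrable lborel (f1 M)"
    "AE x in lborel. M x = 0 \<longrightarrow> mu1 x = 0"
    "integral\<^sup>L lborel (f0 M) \<le> t * integral\<^sup>L lborel (f0 P) + (1-t) * integral\<^sup>L lborel (f0 Q)"
    "\<not> (AE x in lborel. P x = Q x) \<Longrightarrow>
       integral\<^sup>L lborel (f0 M) < t * integral\<^sup>L lborel (f0 P) + (1-t) * integral\<^sup>L lborel (f0 Q)"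
    "integral\<^sup>L lborel (f1 M) \<le> t * integral\<^sup>L lborel (f1 P) + (1-t) * integral\<^sup>L lborel (f1 Q)"
proof -
  note FP = LJ_fin[OF P LP] and FQ = LJ_fin[OF Q LQ]
  have Pm[measurable]: "P \<in> borel_measurable lborel" and Qm[measurable]: "Q \<in> borel_measurable lborel"
    using P Q by (auto simp: prob_density_def)
  have pim[measurable]: "pi1 \<in> borel_measurable lborel" and mum[measurable]: "mu1 \<in> borel_measurable lborel"
    using pi1 mu1 by (auto simp: prob_density_def)
  have Pn: "\<And>x. 0 \<le> P x" and Qn: "\<And>x. 0 \<le> Q x" using P Q by (auto simp: prob_density_def)
  have Mm[measurable]: "M \<in> borel_measurable lborel" unfolding M_def by measurable
  have Mn: "\<And>x. 0 \<le> M x" unfolding M_def using Pn Qn t by simp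
  have iP: "integrable lborel P" "integral\<^sup>L lborel P = 1" using prob_density_int[OF P] by auto
  have iQ: "integrable lborel Q" "integral\<^sup>L lborel Q = 1" using prob_density_int[OF Q] by auto
  have iM: "integrable lborel M" unfolding M_def using iP iQ by auto
  have iM1: "integral\<^sup>L lborel M = 1" unfolding M_def using iP iQ by simp
  show "prob_density M"
    unfolding prob_density_def using Mn iM iM1 nn_integral_eq_integral[OF iM] by simp
  have acP: "AE x in lborel. P x = 0 \<longrightarrow> mu1 x = 0" and acQ: "AE x in lborel. Q x = 0 \<longrightarrow> mu1 x = 0"
    using FP FQ by auto
  show acM: "AE x in lborel. M x = 0 \<longrightarrow> mu1 x = 0" using acP acQ
  proof eventually_elim
    case (elim x)
    show ?case
    proof
      assume "M x = 0"
      have "t * P x \<ge> 0" "(1-t) * Q x \<ge> 0" using Pn Qn t by simp_all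
      moreover have "t * P x + (1-t) * Q x = 0" using \<open>M x = 0\<close> by (simp add: M_def)
      ultimately have "t * P x = 0" by linarith
      then show "mu1 x = 0" using elim t by simp
    qed
  qed
  have up0: "\<And>x. f0 M x \<le> t * f0 P x + (1-t) * f0 Q x"
    unfolding f0_def M_def using f0_mix_pt(1)[OF Pn Qn t pipos] .
  have up0s: "\<And>x. P x \<noteq> Q x \<Longrightarrow> f0 M x < t * f0 P x + (1-t) * f0 Q x"
    unfolding f0_def M_def using f0_mix_pt(2)[OF Pn Qn t pipos] .
  have i0P: "integrable lborel (f0 P)" and i0Q: "integrable lborel (f0 Q)" using FP FQ by auto
  have i1P: "integrable lborel (f1 P)" and i1Q: "integrable lborel (f1 Q)" using FP FQ by auto
  have iU0: "integrable lborel (\<lambda>x. t * f0 P x + (1-t) * f0 Q x)" using i0P i0Q by auto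
  have iU1: "integrable lborel (\<lambda>x. t * f1 P x + (1-t) * f1 Q x)" using i1P i1Q by auto
  show i0M: "integrable lborel (f0 M)"
  proof (rule integrable_sandwich[OF _ iU0])
    show "integrable lborel (\<lambda>x. M x - pi1 x)" using iM prob_density_int[OF pi1] by auto
    show "f0 M \<in> borel_measurable lborel" by (rule f0_meas) simp
    show "AE x in lborel. M x - pi1 x \<le> f0 M x \<and> f0 M x \<le> t * f0 P x + (1 - t) * f0 Q x"
      using f0_lower[of M, OF Mn] up0 by auto
  qed
  have up1: "AE x in lborel. f1 M x \<le> t * f1 P x + (1-t) * f1 Q x" using acP acQ
  proof eventually_elim
    case (elim x)
    show ?case
    proof (cases "mu1 x = 0")
      case True then show ?thesis by (simp add: f1_def)
    next
      case False
      then have "0 < P x" "0 < Q x" using elim Pn[of x] Qn[of x] by auto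
      then show ?thesis unfolding f1_def M_def using f1_mix_pt[OF _ _ t mu_nn] by blast
    qed
  qed
  have lo1: "AE x in lborel. f1 M x \<ge> mu1 x - M x" using acM
  proof eventually_elim
    case (elim x)
    then have "0 < M x \<or> mu1 x = 0" using Mn[of x] by force
    then show ?case by (rule f1_lower[OF Mn])
  qed
  show i1M: "integrable lborel (f1 M)"
  proof (rule integrable_sandwich[OF _ iU1])
    show "integrable lborel (\<lambda>x. mu1 x - M x)" using iM prob_density_int[OF mu1] by auto
    show "f1 M \<in> borel_measurable lborel" by (rule f1_meas) simp
    show "AE x in lborel. mu1 x - M x \<le> f1 M x \<and> f1 M x \<le> t * f1 P x + (1 - t) * f1 Q x"
      using lo1 up1 by auto
  qed
  have e0: "integral\<^sup>L lborel (\<lambda>x. t * f0 P x + (1-t) * f0 Q x) = t * integral\<^sup>L lborel (f0 P) + (1-t) * integral\<^sup>L lborel (f0 Q)"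
    using i0P i0Q by simp
  have e1: "integral\<^sup>L lborel (\<lambda>x. t * f1 P x + (1-t) * f1 Q x) = t * integral\<^sup>L lborel (f1 P) + (1-t) * integral\<^sup>L lborel (f1 Q)"
    using i1P i1Q by simp
  show le0: "integral\<^sup>L lborel (f0 M) \<le> t * integral\<^sup>L lborel (f0 P) + (1-t) * integral\<^sup>L lborel (f0 Q)"
    using integral_mono[OF i0M iU0 up0] e0 by simp
  show "integral\<^sup>L lborel (f1 M) \<le> t * integral\<^sup>L lborel (f1 P) + (1-t) * integral\<^sup>L lborel (f1 Q)"
    using integral_mono_AE[OF i1M iU1 up1] e1 by simp
  assume nae: "\<not> (AE x in lborel. P x = Q x)"
  show "integral\<^sup>L lborel (f0 M) < t * integral\<^sup>L lborel (f0 P) + (1-t) * integral\<^sup>L lborel (f0 Q)"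
  proof (rule ccontr)
    assume "\<not> ?thesis"
    then have eq: "integral\<^sup>L lborel (f0 M) = t * integral\<^sup>L lborel (f0 P) + (1-t) * integral\<^sup>L lborel (f0 Q)"
      using le0 by simp
    have "integral\<^sup>L lborel (\<lambda>x. (t * f0 P x + (1-t) * f0 Q x) - f0 M x) = 0"
      using eq e0 iU0 i0M by simp
    moreover have "integrable lborel (\<lambda>x. (t * f0 P x + (1-t) * f0 Q x) - f0 M x)" using iU0 i0M by auto
    ultimately have "AE x in lborel. (t * f0 P x + (1-t) * f0 Q x) - f0 M x = 0"
      using integral_nonneg_eq_0_iff_AE[of lborel "\<lambda>x. (t * f0 P x + (1-t) * f0 Q x) - f0 M x"] up0
      by (simp add: algebra_simps)
    then have "AE x in lborel. P x = Q x"
      by eventually_elim (use up0s in force)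
    then show False using nae by simp
  qed
qed


lemma conv_fin:
  assumes P: "prob_density P" and LP: "LJ lam0 lam1 pi1 mu1 P < \<infinity>"
    and Q: "prob_density Q" and LQ: "LJ lam0 lam1 pi1 mu1 Q < \<infinity>"
    and t: "0 < t" "t < 1"
  shows "prob_density (\<lambda>x. t * P x + (1 - t) * Q x) \<and> LJ lam0 lam1 pi1 mu1 (\<lambda>x. t * P x + (1 - t) * Q x) < \<infinity>"
proof -
  note m = mix[OF P LP Q LQ t]
  show ?thesis using m(1) LJ_of_int[OF m(4,2,3)] by simp
qed

lemma conv_strict:
  assumes P: "prob_density P" and LP: "LJ lam0 lam1 pi1 mu1 P < \<infinity>"
    and Q: "prob_density Q" and LQ: "LJ lam0 lam1 pi1 mu1 Q < \<infinity>"
    and t: "0 < t" "t < 1" and nae: "\<not> (AE x in lborel. P x = Q x)"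
  shows "LJ lam0 lam1 pi1 mu1 (\<lambda>x. t * P x + (1 - t) * Q x)
          < ereal t * LJ lam0 lam1 pi1 mu1 P + ereal (1 - t) * LJ lam0 lam1 pi1 mu1 Q"
proof -
  note m = mix[OF P LP Q LQ t]
  define M where "M = (\<lambda>x. t * P x + (1 - t) * Q x)"
  have a: "lam0 * integral\<^sup>L lborel (f0 M) < lam0 * (t * integral\<^sup>L lborel (f0 P) + (1-t) * integral\<^sup>L lborel (f0 Q))"
    using m(6)[OF nae] l0 unfolding M_def by (intro mult_strict_left_mono) auto
  have b: "lam1 * integral\<^sup>L lborel (f1 M) \<le> lam1 * (t * integral\<^sup>L lborel (f1 P) + (1-t) * integral\<^sup>L lborel (f1 Q))"
    using m(7) l1 unfolding M_def by (intro mult_left_mono) auto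
  have "lam0 * integral\<^sup>L lborel (f0 M) + lam1 * integral\<^sup>L lborel (f1 M)
     < t * (lam0 * integral\<^sup>L lborel (f0 P) + lam1 * integral\<^sup>L lborel (f1 P))
       + (1 - t) * (lam0 * integral\<^sup>L lborel (f0 Q) + lam1 * integral\<^sup>L lborel (f1 Q))"
    using a b by (simp add: algebra_simps)
  then show ?thesis
    using LJ_of_int[OF m(4,2,3)] LJ_fin[OF P LP] LJ_fin[OF Q LQ] unfolding M_def by simp
qed


definition "aa = lam1 / lam0"
definition "ps s x = solp aa (pi1 x) (mu1 x) s"

lemma aa_pos: "0 < aa" using l0 l1 by (simp add: aa_def)
lemma aa_nn: "0 \<le> aa" using aa_pos by simp

lemma ps_spec:
  "0 < ps s x" "gfun aa (pi1 x) (mu1 x) (ps s x) = s"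
  "pi1 x * exp s \<le> ps s x" "ps s x \<le> pi1 x * exp (s+1) + aa * mu1 x"
  using solp_spec[OF aa_nn mu_nn pipos] unfolding ps_def by auto

lemma ps_mono: "s1 \<le> s2 \<Longrightarrow> ps s1 x \<le> ps s2 x"
  unfolding ps_def by (rule solp_mono[OF aa_nn mu_nn[of x] pipos[of x]])
lemma ps_lip: "s1 \<le> s2 \<Longrightarrow> ps s2 x - ps s1 x \<le> ps s2 x * (s2 - s1)"
  unfolding ps_def by (rule solp_lip[OF aa_nn mu_nn[of x] pipos[of x]])
lemma ps_neg: "s < 0 \<Longrightarrow> ps s x \<le> pi1 x * exp (s/2) + 2 * aa * mu1 x / (- s)"
  unfolding ps_def by (rule solp_neg[OF aa_nn mu_nn[of x] pipos[of x]])

lemma ps_le_iff: "0 < c \<Longrightarrow> ps s x \<le> c \<longleftrightarrow> s \<le> gfun aa (pi1 x) (mu1 x) c"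
  unfolding ps_def by (rule solp_le_iff[OF aa_nn mu_nn[of x] pipos[of x]])

lemma pim[measurable]: "pi1 \<in> borel_measurable lborel" using pi1 by (simp add: prob_density_def)
lemma mum[measurable]: "mu1 \<in> borel_measurable lborel" using mu1 by (simp add: prob_density_def)

lemma ps_meas[measurable]: "ps s \<in> borel_measurable lborel"
proof (subst borel_measurable_iff_le, intro allI)
  fix c :: real
  show "{w \<in> space lborel. ps s w \<le> c} \<in> sets lborel"
  proof (cases "c \<le> 0")
    case True
    have "c < ps s w" for w using ps_spec(1)[where s=s and x=w] True by linarith
    then have "{w \<in> space lborel. ps s w \<le> c} = {}" by (auto simp: not_le)
    then show ?thesis by simp
  next
    case False
    then have "{w \<in> space lborel. ps s w \<le> c} = {w \<in> space lborel. s \<le> ln c - ln (pi1 w) - aa * mu1 w / c}"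
      using ps_le_iff[of c s] by (auto simp: gfun_def)
    moreover have "{w \<in> space lborel. s \<le> ln c - ln (pi1 w) - aa * mu1 w / c} \<in> sets lborel"
      by measurable
    ultimately show ?thesis by simp
  qed
qed

lemma ps_int: "integrable lborel (ps s)"
proof (rule integrable_sandwich[where l="\<lambda>x. 0" and u="\<lambda>x. pi1 x * exp (s+1) + aa * mu1 x"])
  show "integrable lborel (\<lambda>x. pi1 x * exp (s+1) + aa * mu1 x)"
    using prob_density_int(1)[OF pi1] prob_density_int(1)[OF mu1] by auto
  show "AE x in lborel. 0 \<le> ps s x \<and> ps s x \<le> pi1 x * exp (s + 1) + aa * mu1 x"
    using ps_spec(1,4) by (auto intro: less_imp_le)
qed auto

definition "hh s = integral\<^sup>L lborel (ps s)"

lemma hh_mono: "s1 \<le> s2 \<Longrightarrow> hh s1 \<le> hh s2"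
  unfolding hh_def by (rule integral_mono[OF ps_int ps_int]) (rule ps_mono)

lemma hh_lip: "s1 \<le> s2 \<Longrightarrow> hh s2 - hh s1 \<le> hh s2 * (s2 - s1)"
proof -
  assume s: "s1 \<le> s2"
  have "integral\<^sup>L lborel (\<lambda>x. ps s2 x - ps s1 x) \<le> integral\<^sup>L lborel (\<lambda>x. ps s2 x * (s2 - s1))"
    by (rule integral_mono) (use ps_int ps_lip[OF s] in auto)
  then show ?thesis unfolding hh_def using ps_int by simp
qed

lemma hh0: "1 \<le> hh 0"
proof -
  have "integral\<^sup>L lborel pi1 \<le> integral\<^sup>L lborel (ps 0)"
    by (rule integral_mono[OF prob_density_int(1)[OF pi1] ps_int]) (use ps_spec(3)[where s=0] in simp)
  then show ?thesis using prob_density_int(2)[OF pi1] by (simp add: hh_def)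
qed

definition "KK = 4 * aa + 4"

lemma hhK: "hh (- KK) \<le> 1"
proof -
  have K: "0 < KK" using aa_pos by (simp add: KK_def)
  have "hh (- KK) \<le> integral\<^sup>L lborel (\<lambda>x. pi1 x * exp (- KK / 2) + 2 * aa * mu1 x / KK)"
    unfolding hh_def
    by (rule integral_mono[OF ps_int])
       (use prob_density_int(1)[OF pi1] prob_density_int(1)[OF mu1]
            ps_neg[where s="- KK"] K in auto)
  also have "\<dots> = exp (- KK / 2) + 2 * aa / KK"
    using prob_density_int[OF pi1] prob_density_int[OF mu1] by simp
  also have "\<dots> \<le> 1"
  proof -
    have "1 + KK / 2 \<le> exp (KK / 2)" by (rule exp_ge_add_one_self)
    moreover have "2 \<le> 1 + KK / 2" using aa_pos by (simp add: KK_def)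
    ultimately have "2 \<le> exp (KK / 2)" by linarith
    moreover have "exp (- KK / 2) = inverse (exp (KK / 2))" by (simp add: exp_minus[symmetric])
    ultimately have "exp (- KK / 2) \<le> inverse 2"
      using le_imp_inverse_le[of 2 "exp (KK / 2)"] by simp
    then have "exp (- KK / 2) \<le> 1 / 2" by simp
    moreover have "2 * aa / KK \<le> 1 / 2" using aa_pos by (simp add: KK_def field_simps)
    ultimately show ?thesis by linarith
  qed
  finally show ?thesis .
qed

lemma hh_cont: "continuous_on {- KK..0} hh"
proof (rule lipschitz_on_continuous_on)
  show "(hh 0)-lipschitz_on {- KK..0} hh"
  proof (rule lipschitz_onI)
    show "0 \<le> hh 0" using hh0 by simp
    fix x y assume x: "x \<in> {- KK..0}" and y: "y \<in> {- KK..0}"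
    have gen: "\<bar>hh v - hh u\<bar> \<le> hh 0 * \<bar>v - u\<bar>" if "u \<le> v" "v \<le> 0" for u v
    proof -
      have "hh u \<le> hh v" using hh_mono that by simp
      moreover have "hh v - hh u \<le> hh v * (v - u)" using hh_lip that by simp
      moreover have "hh v * (v - u) \<le> hh 0 * (v - u)" using hh_mono[of v 0] that by (intro mult_right_mono) auto
      ultimately show ?thesis using that by simp
    qed
    show "dist (hh x) (hh y) \<le> hh 0 * dist x y"
    proof (cases "x \<le> y")
      case True then show ?thesis using gen[of x y] y by (simp add: dist_real_def abs_minus_commute)
    next
      case False then show ?thesis using gen[of y x] x by (simp add: dist_real_def)
    qed
  qed
qed

lemma sstar_ex: "\<exists>s. hh s = 1"
proof -
  have K: "0 < KK" using aa_pos by (simp add: KK_def)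
  from IVT'[of hh "- KK" 1 0, OF hhK hh0 _ hh_cont] K show ?thesis by auto
qed


definition "sst = (SOME s. hh s = 1)"
definition "Pst = ps sst"

lemma hh_sst: "hh sst = 1" unfolding sst_def using sstar_ex by (rule someI_ex)

lemma Pst_pos: "0 < Pst x" unfolding Pst_def by (rule ps_spec(1))

lemma Pst_meas[measurable]: "Pst \<in> borel_measurable lborel" unfolding Pst_def by simp

lemma Pst_int: "integrable lborel Pst" "integral\<^sup>L lborel Pst = 1"
  using ps_int hh_sst by (auto simp: Pst_def hh_def)

lemma Pst_prob: "prob_density Pst"
  unfolding prob_density_def using Pst_int nn_integral_eq_integral[OF Pst_int(1)] Pst_pos
  by (auto intro: less_imp_le)

lemma Pst_eq: "ln (Pst x) - ln (pi1 x) - aa * mu1 x / Pst x = sst"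
  using ps_spec(2)[where s=sst and x=x] by (simp add: Pst_def gfun_def)

lemma Pst_pt:
  assumes "0 \<le> q" "q = 0 \<longrightarrow> mu1 x = 0"
  shows "q * ln (q / pi1 x) + aa * (mu1 x * ln (mu1 x / q)) \<ge>
     f0 Pst x + aa * f1 Pst x + (sst + 1) * (q - Pst x)"
  using key_pt[OF aa_nn pipos[of x] mu_nn[of x] Pst_pos[of x] assms] Pst_eq[of x]
  by (simp add: f0_def f1_def)

lemma f0mu_int: "integrable lborel (f0 mu1)"
proof -
  have "KL mu1 pi1 \<noteq> \<infinity>" using KLmu by simp
  from KL_cases[OF mu1 pi1 this] show ?thesis by (simp add: f0_def[abs_def])
qed

lemma f1mu: "f1 mu1 x = 0"
  by (cases "mu1 x = 0") (auto simp: f1_def)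

lemma Pst_up: "f0 Pst x + aa * f1 Pst x \<le> f0 mu1 x - (sst + 1) * (mu1 x - Pst x)"
proof -
  have e: "mu1 x * ln (mu1 x / mu1 x) = 0" using f1mu[of x] unfolding f1_def .
  have "mu1 x * ln (mu1 x / pi1 x) + aa * (mu1 x * ln (mu1 x / mu1 x)) \<ge>
     f0 Pst x + aa * f1 Pst x + (sst + 1) * (mu1 x - Pst x)"
    using Pst_pt[of "mu1 x" x] mu_nn[of x] by blast
  then show ?thesis unfolding e f0_def by linarith
qed

lemma Pst_int2: "integrable lborel (f0 Pst)" "integrable lborel (f1 Pst)"
proof -
  have lo0: "f0 Pst x \<ge> Pst x - pi1 x" for x using f0_lower[of Pst x] Pst_pos[of x] by simp
  have lo1: "f1 Pst x \<ge> mu1 x - Pst x" for x using f1_lower[of Pst x] Pst_pos[of x] by simp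
  have iP: "integrable lborel Pst" using Pst_int by simp
  have ipi: "integrable lborel pi1" and imu: "integrable lborel mu1"
    using prob_density_int(1)[OF pi1] prob_density_int(1)[OF mu1] .
  show "integrable lborel (f0 Pst)"
  proof (rule integrable_sandwich[where l="\<lambda>x. Pst x - pi1 x"
        and u="\<lambda>x. f0 mu1 x - (sst + 1) * (mu1 x - Pst x) - aa * (mu1 x - Pst x)"])
    show "integrable lborel (\<lambda>x. Pst x - pi1 x)" using iP ipi by auto
    show "integrable lborel (\<lambda>x. f0 mu1 x - (sst + 1) * (mu1 x - Pst x) - aa * (mu1 x - Pst x))"
      using f0mu_int iP imu by auto
    show "f0 Pst \<in> borel_measurable lborel" by (rule f0_meas) simp
    show "AE x in lborel. Pst x - pi1 x \<le> f0 Pst x \<and>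
        f0 Pst x \<le> f0 mu1 x - (sst + 1) * (mu1 x - Pst x) - aa * (mu1 x - Pst x)"
    proof (rule AE_I2)
      fix x
      have "aa * (mu1 x - Pst x) \<le> aa * f1 Pst x" using lo1[of x] aa_pos by (intro mult_left_mono) auto
      then show "Pst x - pi1 x \<le> f0 Pst x \<and>
        f0 Pst x \<le> f0 mu1 x - (sst + 1) * (mu1 x - Pst x) - aa * (mu1 x - Pst x)"
        using lo0[of x] Pst_up[of x] by linarith
    qed
  qed
  show "integrable lborel (f1 Pst)"
  proof (rule integrable_sandwich[where l="\<lambda>x. mu1 x - Pst x"
        and u="\<lambda>x. (f0 mu1 x - (sst + 1) * (mu1 x - Pst x) - (Pst x - pi1 x)) / aa"])
    show "integrable lborel (\<lambda>x. mu1 x - Pst x)" using iP imu by auto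
    show "integrable lborel (\<lambda>x. (f0 mu1 x - (sst + 1) * (mu1 x - Pst x) - (Pst x - pi1 x)) / aa)"
      using f0mu_int iP imu ipi by auto
    show "f1 Pst \<in> borel_measurable lborel" by (rule f1_meas) simp
    show "AE x in lborel. mu1 x - Pst x \<le> f1 Pst x \<and>
        f1 Pst x \<le> (f0 mu1 x - (sst + 1) * (mu1 x - Pst x) - (Pst x - pi1 x)) / aa"
    proof (rule AE_I2)
      fix x
      have "aa * f1 Pst x \<le> f0 mu1 x - (sst + 1) * (mu1 x - Pst x) - (Pst x - pi1 x)"
        using lo0[of x] Pst_up[of x] by linarith
      then have "f1 Pst x \<le> (f0 mu1 x - (sst + 1) * (mu1 x - Pst x) - (Pst x - pi1 x)) / aa"
        using aa_pos by (simp add: le_divide_eq mult.commute)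
      then show "mu1 x - Pst x \<le> f1 Pst x \<and>
        f1 Pst x \<le> (f0 mu1 x - (sst + 1) * (mu1 x - Pst x) - (Pst x - pi1 x)) / aa"
        using lo1[of x] by simp
    qed
  qed
qed

lemma LJ_Pst: "LJ lam0 lam1 pi1 mu1 Pst = ereal (lam0 * integral\<^sup>L lborel (f0 Pst) + lam1 * integral\<^sup>L lborel (f1 Pst))"
proof (rule LJ_of_int[OF _ Pst_int2])
  show "AE x in lborel. Pst x = 0 \<longrightarrow> mu1 x = 0"
  proof (rule AE_I2)
    fix x show "Pst x = 0 \<longrightarrow> mu1 x = 0" using Pst_pos[of x] by simp
  qed
qed

lemma Pst_min:
  assumes Q: "prob_density Q" shows "LJ lam0 lam1 pi1 mu1 Pst \<le> LJ lam0 lam1 pi1 mu1 Q"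
proof (cases "LJ lam0 lam1 pi1 mu1 Q < \<infinity>")
  case False then show ?thesis by (simp add: not_less)
next
  case True
  note F = LJ_fin[OF Q True]
  have Qn: "\<And>x. 0 \<le> Q x" using Q by (simp add: prob_density_def)
  have iQ: "integrable lborel Q" "integral\<^sup>L lborel Q = 1" using prob_density_int[OF Q] by auto
  have pt: "AE x in lborel. f0 Pst x + aa * f1 Pst x + (sst + 1) * (Q x - Pst x) \<le> f0 Q x + aa * f1 Q x"
    using conjunct1[OF conjunct2[OF conjunct2[OF F]]]
  proof eventually_elim
    case (elim x)
    then show ?case using Pst_pt[OF Qn[of x]] by (simp add: f0_def f1_def)
  qed
  have "integral\<^sup>L lborel (\<lambda>x. f0 Pst x + aa * f1 Pst x + (sst + 1) * (Q x - Pst x))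
      \<le> integral\<^sup>L lborel (\<lambda>x. f0 Q x + aa * f1 Q x)"
    by (rule integral_mono_AE[OF _ _ pt]) (use Pst_int2 Pst_int iQ F in auto)
  moreover have "integral\<^sup>L lborel (\<lambda>x. f0 Pst x + aa * f1 Pst x + (sst + 1) * (Q x - Pst x))
      = integral\<^sup>L lborel (f0 Pst) + aa * integral\<^sup>L lborel (f1 Pst)"
    using Pst_int2 Pst_int iQ by simp
  moreover have "integral\<^sup>L lborel (\<lambda>x. f0 Q x + aa * f1 Q x)
      = integral\<^sup>L lborel (f0 Q) + aa * integral\<^sup>L lborel (f1 Q)"
    using F by simp
  ultimately have le: "integral\<^sup>L lborel (f0 Pst) + aa * integral\<^sup>L lborel (f1 Pst)
      \<le> integral\<^sup>L lborel (f0 Q) + aa * integral\<^sup>L lborel (f1 Q)" by simp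
  have "lam0 * (integral\<^sup>L lborel (f0 Pst) + aa * integral\<^sup>L lborel (f1 Pst))
      \<le> lam0 * (integral\<^sup>L lborel (f0 Q) + aa * integral\<^sup>L lborel (f1 Q))"
    using le l0 by (intro mult_left_mono) auto
  moreover have "lam0 * (aa * X) = lam1 * X" for X using l0 by (simp add: aa_def)
  ultimately have "lam0 * integral\<^sup>L lborel (f0 Pst) + lam1 * integral\<^sup>L lborel (f1 Pst)
      \<le> lam0 * integral\<^sup>L lborel (f0 Q) + lam1 * integral\<^sup>L lborel (f1 Q)"
    by (simp add: algebra_simps)
  then show ?thesis using LJ_Pst F by simp
qed


lemma Pst_fin: "LJ lam0 lam1 pi1 mu1 Pst < \<infinity>" using LJ_Pst by simp

lemma Pst_unique:
  assumes P: "prob_density P" and minP: "\<forall>Q. prob_density Q \<longrightarrow> LJ lam0 lam1 pi1 mu1 P \<le> LJ lam0 lam1 pi1 mu1 Q"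
  shows "AE x in lborel. P x = Pst x"
proof (rule ccontr)
  assume nae: "\<not> (AE x in lborel. P x = Pst x)"
  have e: "LJ lam0 lam1 pi1 mu1 P = LJ lam0 lam1 pi1 mu1 Pst"
    using minP Pst_prob Pst_min[OF P] by (auto intro: order.antisym)
  have finP: "LJ lam0 lam1 pi1 mu1 P < \<infinity>" using e Pst_fin by simp
  define M where "M = (\<lambda>x. (1/2) * P x + (1 - 1/2) * Pst x)"
  have Mp: "prob_density M" using conv_fin[OF P finP Pst_prob Pst_fin, of "1/2"] by (simp add: M_def)
  have lt: "LJ lam0 lam1 pi1 mu1 M < ereal (1/2) * LJ lam0 lam1 pi1 mu1 P + ereal (1 - 1/2) * LJ lam0 lam1 pi1 mu1 Pst"
    using conv_strict[OF P finP Pst_prob Pst_fin _ _ nae, of "1/2"] by (simp add: M_def)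
  obtain r where r: "LJ lam0 lam1 pi1 mu1 Pst = ereal r" using LJ_Pst by blast
  have "ereal (1/2) * LJ lam0 lam1 pi1 mu1 P + ereal (1 - 1/2) * LJ lam0 lam1 pi1 mu1 Pst = LJ lam0 lam1 pi1 mu1 Pst"
    using e r by simp
  then have "LJ lam0 lam1 pi1 mu1 M < LJ lam0 lam1 pi1 mu1 Pst" using lt by simp
  moreover have "LJ lam0 lam1 pi1 mu1 Pst \<le> LJ lam0 lam1 pi1 mu1 M" using Pst_min[OF Mp] .
  ultimately show False by simp
qed

lemma Pst_KL: "KL Pst pi1 \<le> KL mu1 pi1"
proof -
  have f1z: "f1 mu1 = (\<lambda>x. 0)" using f1mu by auto
  have i1mu: "integrable lborel (f1 mu1)" unfolding f1z by simp
  have LJmu: "LJ lam0 lam1 pi1 mu1 mu1 = ereal (lam0 * integral\<^sup>L lborel (f0 mu1) + lam1 * integral\<^sup>L lborel (f1 mu1))"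
    by (rule LJ_of_int[OF _ f0mu_int i1mu]) simp
  have z: "integral\<^sup>L lborel (f1 mu1) = 0" unfolding f1z by simp
  have "LJ lam0 lam1 pi1 mu1 Pst \<le> LJ lam0 lam1 pi1 mu1 mu1" using Pst_min[OF mu1] .
  then have le: "lam0 * integral\<^sup>L lborel (f0 Pst) + lam1 * integral\<^sup>L lborel (f1 Pst) \<le> lam0 * integral\<^sup>L lborel (f0 mu1)"
    using LJ_Pst LJmu z by simp
  have ac: "AE x in lborel. Pst x = 0 \<longrightarrow> mu1 x = 0"
  proof (rule AE_I2)
    fix x show "Pst x = 0 \<longrightarrow> mu1 x = 0" using Pst_pos[of x] by simp
  qed
  have "0 \<le> integral\<^sup>L lborel (f1 Pst)"
    using KL_integral_ge[OF mu1 Pst_prob ac] Pst_int2(2) by (simp add: f1_def[abs_def])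
  then have "0 \<le> lam1 * integral\<^sup>L lborel (f1 Pst)" using l1 by simp
  then have "lam0 * integral\<^sup>L lborel (f0 Pst) \<le> lam0 * integral\<^sup>L lborel (f0 mu1)" using le by linarith
  then have r: "integral\<^sup>L lborel (f0 Pst) \<le> integral\<^sup>L lborel (f0 mu1)" using l0 by simp
  have ac2: "AE x in lborel. pi1 x = 0 \<longrightarrow> P x = 0" for P :: "'a \<Rightarrow> real"
  proof (rule AE_I2)
    fix x show "pi1 x = 0 \<longrightarrow> P x = 0" using pipos[of x] by simp
  qed
  have "KL Pst pi1 = ereal (integral\<^sup>L lborel (f0 Pst))"
    using KL_int[OF ac2] Pst_int2(1) by (simp add: f0_def[abs_def])
  moreover have "KL mu1 pi1 = ereal (integral\<^sup>L lborel (f0 mu1))"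
    using KL_int[OF ac2] f0mu_int by (simp add: f0_def[abs_def])
  ultimately show ?thesis using r by simp
qed

end

theorem theorem1:
  fixes pi1 mu1 :: "'a::euclidean_space \<Rightarrow> real" and lam0 lam1 :: real
  assumes "prob_density pi1" and "prob_density mu1"
    and "\<forall>x. pi1 x > 0"
    and "KL mu1 pi1 < \<infinity>"
    and "lam0 > 0" and "lam1 > 0"
  shows
    "(\<forall>P Q t. prob_density P \<and> LJ lam0 lam1 pi1 mu1 P < \<infinity>
        \<and> prob_density Q \<and> LJ lam0 lam1 pi1 mu1 Q < \<infinity> \<and> 0 < t \<and> t < 1 \<longrightarrow>
        prob_density (\<lambda>x. t * P x + (1 - t) * Q x)
        \<and> LJ lam0 lam1 pi1 mu1 (\<lambda>x. t * P x + (1 - t) * Q x) < \<infinity>)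
   \<and> (\<forall>P Q t. prob_density P \<and> LJ lam0 lam1 pi1 mu1 P < \<infinity>
        \<and> prob_density Q \<and> LJ lam0 lam1 pi1 mu1 Q < \<infinity> \<and> 0 < t \<and> t < 1
        \<and> \<not> (AE x in lborel. P x = Q x) \<longrightarrow>
        LJ lam0 lam1 pi1 mu1 (\<lambda>x. t * P x + (1 - t) * Q x)
          < ereal t * LJ lam0 lam1 pi1 mu1 P + ereal (1 - t) * LJ lam0 lam1 pi1 mu1 Q)
   \<and> (\<exists>Pstar. prob_density Pstar
        \<and> (\<forall>P. prob_density P \<longrightarrow> LJ lam0 lam1 pi1 mu1 Pstar \<le> LJ lam0 lam1 pi1 mu1 P)
        \<and> (\<forall>P. prob_density P \<and> (\<forall>Q. prob_density Q \<longrightarrow>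
                 LJ lam0 lam1 pi1 mu1 P \<le> LJ lam0 lam1 pi1 mu1 Q)
               \<longrightarrow> (AE x in lborel. P x = Pstar x))
        \<and> KL Pstar pi1 \<le> KL mu1 pi1)"
proof -
  interpret J: jset pi1 mu1 lam0 lam1
    using assms by unfold_locales auto
  show ?thesis
  proof (intro conjI)
    show "\<forall>P Q t. prob_density P \<and> LJ lam0 lam1 pi1 mu1 P < \<infinity>
        \<and> prob_density Q \<and> LJ lam0 lam1 pi1 mu1 Q < \<infinity> \<and> 0 < t \<and> t < 1 \<longrightarrow>
        prob_density (\<lambda>x. t * P x + (1 - t) * Q x)
        \<and> LJ lam0 lam1 pi1 mu1 (\<lambda>x. t * P x + (1 - t) * Q x) < \<infinity>"
      using J.conv_fin by blast
    show "\<forall>P Q t. prob_density P \<and> LJ lam0 lam1 pi1 mu1 P < \<infinity>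
        \<and> prob_density Q \<and> LJ lam0 lam1 pi1 mu1 Q < \<infinity> \<and> 0 < t \<and> t < 1
        \<and> \<not> (AE x in lborel. P x = Q x) \<longrightarrow>
        LJ lam0 lam1 pi1 mu1 (\<lambda>x. t * P x + (1 - t) * Q x)
          < ereal t * LJ lam0 lam1 pi1 mu1 P + ereal (1 - t) * LJ lam0 lam1 pi1 mu1 Q"
      using J.conv_strict by blast
    show "\<exists>Pstar. prob_density Pstar
        \<and> (\<forall>P. prob_density P \<longrightarrow> LJ lam0 lam1 pi1 mu1 Pstar \<le> LJ lam0 lam1 pi1 mu1 P)
        \<and> (\<forall>P. prob_density P \<and> (\<forall>Q. prob_density Q \<longrightarrow>
                 LJ lam0 lam1 pi1 mu1 P \<le> LJ lam0 lam1 pi1 mu1 Q)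
               \<longrightarrow> (AE x in lborel. P x = Pstar x))
        \<and> KL Pstar pi1 \<le> KL mu1 pi1"
      using J.Pst_prob J.Pst_min J.Pst_unique J.Pst_KL by blast
  qed
qed

end
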